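(* Let $A=k_{p_{ij}}[x_1,\dots,x_n]$ and let $G$ be a finite subgroup of $\mathrm{Aut}(A)$ generated by quasi-reflections such that $[n]$ is a circle for $G$. Then after replacing each $x_i$ by a suitable nonzero scalar multiple $c_ix_i$ (which leaves the relations $x_jx_i=p_{ij}x_ix_j$ unchanged), one has $\tau_{i,j,1}\in G$ for all $i\ne j$ in $[n]$. Consequently $p_{ij}=-1$ for all $i<j$.
   Context: $k$ is algebraically closed of characteristic zero, $n\ge2$, $[n]=\{1,\dots,n\}$. $A=k_{p_{ij}}[x_1,\dots,x_n]$ is generated by $x_1,\dots,x_n$ with $x_jx_i=p_{ij}x_ix_j$ ($i<j$), nonzero $p_{ij}$, $\deg x_i=1$; $p_{ii}=1$, $p_{ij}=p_{ji}^{-1}$ for $i>j$. $\mathrm{Aut}(A)$: graded algebra automorphisms; $g$ is a quasi-reflection if $\sum_i\mathrm{tr}(g|_{A_i})t^i=\frac1{(1-t)^{n-1}(1-\lambda t)}$ with $\lambda\ne1$. For $s,t$ with $p_{st}=-1$ and $p_{sj}=p_{tj}$ ($j\ne s,t$) and $\lambda\in k^\times$, $\tau_{s,t,\lambda}$ is the automorphism with $x_s\mapsto\lambda x_t$, $x_t\mapsto-\lambda^{-1}x_s$, $x_i\mapsto x_i$ otherwise. $[n]$ is a circle for $G$ if for each pair of distinct $i,j\in[n]$ there are $\tau_{i_s,j_s,\lambda_s}\in G$, $s=0,\dots,t$, with $i_0=i$, $i_{s+1}=j_s$, $j_t=j$. *)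

theory Defs
  imports "HOL-Computational_Algebra.Polynomial" "HOL-Computational_Algebra.Formal_Power_Series"
begin

text \<open>The skew polynomial ring A = k_{p_ij}[x_1,...,x_n], variables indexed by {1..n}.
  A monomial x^a = x_1^{a_1} ... x_n^{a_n} (ordered product) is an exponent vector
  a :: nat => nat vanishing outside {1..n}.  An element of A is a finitely supported
  coefficient function on monomials.\<close>

definition mons :: "nat \<Rightarrow> (nat \<Rightarrow> nat) set" where
  "mons n = {a. \<forall>i. i \<notin> {1..n} \<longrightarrow> a i = 0}"

definition mdeg :: "nat \<Rightarrow> (nat \<Rightarrow> nat) \<Rightarrow> nat" where
  "mdeg n a = (\<Sum>i\<in>{1..n}. a i)"

definition skew_carrier :: "nat \<Rightarrow> ((nat \<Rightarrow> nat) \<Rightarrow> 'k::field) set" where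
  "skew_carrier n = {f. finite {a. f a \<noteq> 0} \<and> (\<forall>a. f a \<noteq> 0 \<longrightarrow> a \<in> mons n)}"

text \<open>x^a x^b = (prod_{j<i} p_{ji}^{a_i b_j}) x^{a+b}, using x_i x_j = p_{ji} x_j x_i.\<close>
definition twist :: "(nat \<Rightarrow> nat \<Rightarrow> 'k::field) \<Rightarrow> nat \<Rightarrow> (nat \<Rightarrow> nat) \<Rightarrow> (nat \<Rightarrow> nat) \<Rightarrow> 'k" where
  "twist p n a b = (\<Prod>(j,i)\<in>{(j,i). j \<in> {1..n} \<and> i \<in> {1..n} \<and> j < i}. p j i ^ (a i * b j))"

definition skew_mult :: "(nat \<Rightarrow> nat \<Rightarrow> 'k::field) \<Rightarrow> nat \<Rightarrow>
    ((nat \<Rightarrow> nat) \<Rightarrow> 'k) \<Rightarrow> ((nat \<Rightarrow> nat) \<Rightarrow> 'k) \<Rightarrow> ((nat \<Rightarrow> nat) \<Rightarrow> 'k)" where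
  "skew_mult p n f g = (\<lambda>c. \<Sum>(a,b)\<in>{(a,b). a \<in> mons n \<and> b \<in> mons n \<and> (\<forall>i. a i + b i = c i)}.
       f a * g b * twist p n a b)"

definition mono :: "(nat \<Rightarrow> nat) \<Rightarrow> ((nat \<Rightarrow> nat) \<Rightarrow> 'k::field)" where
  "mono a = (\<lambda>b. if b = a then 1 else 0)"

definition skew_one :: "(nat \<Rightarrow> nat) \<Rightarrow> 'k::field" where
  "skew_one = mono (\<lambda>_. 0)"

definition var :: "nat \<Rightarrow> ((nat \<Rightarrow> nat) \<Rightarrow> 'k::field)" where
  "var i = mono (\<lambda>j. if j = i then 1 else 0)"

definition smult_el :: "'k::field \<Rightarrow> ((nat \<Rightarrow> nat) \<Rightarrow> 'k) \<Rightarrow> ((nat \<Rightarrow> nat) \<Rightarrow> 'k)" where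
  "smult_el c f = (\<lambda>a. c * f a)"

definition homog :: "nat \<Rightarrow> nat \<Rightarrow> ((nat \<Rightarrow> nat) \<Rightarrow> 'k::field) \<Rightarrow> bool" where
  "homog n d f \<longleftrightarrow> (\<forall>a. f a \<noteq> 0 \<longrightarrow> mdeg n a = d)"

text \<open>Graded k-algebra automorphisms of A (extended by the identity outside the carrier,
  so that Aut(A) is an honest group of functions under composition).\<close>
definition graded_aut :: "(nat \<Rightarrow> nat \<Rightarrow> 'k::field) \<Rightarrow> nat \<Rightarrow>
    (((nat \<Rightarrow> nat) \<Rightarrow> 'k) \<Rightarrow> ((nat \<Rightarrow> nat) \<Rightarrow> 'k)) \<Rightarrow> bool" where
  "graded_aut p n g \<longleftrightarrow>
     bij_betw g (skew_carrier n) (skew_carrier n) \<and>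
     (\<forall>f. f \<notin> skew_carrier n \<longrightarrow> g f = f) \<and>
     (\<forall>f\<in>skew_carrier n. \<forall>h\<in>skew_carrier n. g (\<lambda>a. f a + h a) = (\<lambda>a. g f a + g h a)) \<and>
     (\<forall>c. \<forall>f\<in>skew_carrier n. g (smult_el c f) = smult_el c (g f)) \<and>
     (\<forall>f\<in>skew_carrier n. \<forall>h\<in>skew_carrier n. g (skew_mult p n f h) = skew_mult p n (g f) (g h)) \<and>
     g skew_one = skew_one \<and>
     (\<forall>d. \<forall>f\<in>skew_carrier n. homog n d f \<longrightarrow> homog n d (g f))"

text \<open>Trace of g on A_d (monomial basis) and the trace series.\<close>
definition trace_deg :: "nat \<Rightarrow> (((nat \<Rightarrow> nat) \<Rightarrow> 'k) \<Rightarrow> ((nat \<Rightarrow> nat) \<Rightarrow> 'k::field)) \<Rightarrow> nat \<Rightarrow> 'k" where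
  "trace_deg n g d = (\<Sum>a\<in>{a\<in>mons n. mdeg n a = d}. g (mono a) a)"

definition trace_series :: "nat \<Rightarrow> (((nat \<Rightarrow> nat) \<Rightarrow> 'k) \<Rightarrow> ((nat \<Rightarrow> nat) \<Rightarrow> 'k::field)) \<Rightarrow> 'k fps" where
  "trace_series n g = Abs_fps (trace_deg n g)"

definition quasi_reflection :: "nat \<Rightarrow> (((nat \<Rightarrow> nat) \<Rightarrow> 'k) \<Rightarrow> ((nat \<Rightarrow> nat) \<Rightarrow> 'k::field)) \<Rightarrow> bool" where
  "quasi_reflection n g \<longleftrightarrow> (\<exists>lam. lam \<noteq> 1 \<and>
     trace_series n g = inverse ((1 - fps_X) ^ (n - 1) * (1 - fps_const lam * fps_X)))"

definition aut_subgroup :: "(nat \<Rightarrow> nat \<Rightarrow> 'k::field) \<Rightarrow> nat \<Rightarrow>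
    ((((nat \<Rightarrow> nat) \<Rightarrow> 'k) \<Rightarrow> ((nat \<Rightarrow> nat) \<Rightarrow> 'k)) set) \<Rightarrow> bool" where
  "aut_subgroup p n H \<longleftrightarrow>
     (\<forall>g\<in>H. graded_aut p n g) \<and> id \<in> H \<and> (\<forall>g\<in>H. \<forall>h\<in>H. g \<circ> h \<in> H) \<and>
     (\<forall>g\<in>H. \<exists>h\<in>H. h \<circ> g = id \<and> g \<circ> h = id)"

definition generated_by_qr :: "(nat \<Rightarrow> nat \<Rightarrow> 'k::field) \<Rightarrow> nat \<Rightarrow>
    ((((nat \<Rightarrow> nat) \<Rightarrow> 'k) \<Rightarrow> ((nat \<Rightarrow> nat) \<Rightarrow> 'k)) set) \<Rightarrow> bool" where
  "generated_by_qr p n G \<longleftrightarrow>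
     (\<forall>H. aut_subgroup p n H \<and> {g\<in>G. quasi_reflection n g} \<subseteq> H \<longrightarrow> G \<subseteq> H)"

text \<open>tau_{s,t,lambda} is defined (p_st = -1, p_sj = p_tj for j <> s,t, lambda <> 0)
  and belongs to G.\<close>
definition tau_in :: "(nat \<Rightarrow> nat \<Rightarrow> 'k::field) \<Rightarrow> nat \<Rightarrow>
    ((((nat \<Rightarrow> nat) \<Rightarrow> 'k) \<Rightarrow> ((nat \<Rightarrow> nat) \<Rightarrow> 'k)) set) \<Rightarrow> nat \<Rightarrow> nat \<Rightarrow> 'k \<Rightarrow> bool" where
  "tau_in p n G s t lam \<longleftrightarrow>
     s \<in> {1..n} \<and> t \<in> {1..n} \<and> s \<noteq> t \<and> lam \<noteq> 0 \<and> p s t = -1 \<and>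
     (\<forall>j\<in>{1..n}. j \<noteq> s \<and> j \<noteq> t \<longrightarrow> p s j = p t j) \<and>
     (\<exists>g\<in>G. g (var s) = smult_el lam (var t) \<and> g (var t) = smult_el (- inverse lam) (var s) \<and>
        (\<forall>i\<in>{1..n}. i \<noteq> s \<and> i \<noteq> t \<longrightarrow> g (var i) = var i))"

definition is_circle :: "(nat \<Rightarrow> nat \<Rightarrow> 'k::field) \<Rightarrow> nat \<Rightarrow>
    ((((nat \<Rightarrow> nat) \<Rightarrow> 'k) \<Rightarrow> ((nat \<Rightarrow> nat) \<Rightarrow> 'k)) set) \<Rightarrow> bool" where
  "is_circle p n G \<longleftrightarrow>
     (\<forall>i\<in>{1..n}. \<forall>j\<in>{1..n}. i \<noteq> j \<longrightarrow>
        (i, j) \<in> {(s, t). \<exists>lam. tau_in p n G s t lam}\<^sup>+)"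

end

theory Submission
  imports Defs
begin

lemma smult_smult: "smult_el a (smult_el b f) = smult_el (a*b) f"
  by (simp add: smult_el_def mult.assoc)

lemma smult_one: "smult_el 1 f = f"
  by (simp add: smult_el_def)

lemma var_carrier: "i \<in> {1..n} \<Longrightarrow> var i \<in> skew_carrier n"
proof -
  assume i: "i \<in> {1..n}"
  have "{a. (var i :: (nat \<Rightarrow> nat) \<Rightarrow> 'a) a \<noteq> 0} \<subseteq> {(\<lambda>j. if j = i then 1 else 0)}"
    by (auto simp: var_def mono_def)
  hence "finite {a. (var i :: (nat \<Rightarrow> nat) \<Rightarrow> 'a) a \<noteq> 0}" by (rule finite_subset) simp
  moreover have "\<forall>a. (var i :: (nat \<Rightarrow> nat) \<Rightarrow> 'a) a \<noteq> 0 \<longrightarrow> a \<in> mons n"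
    using i by (auto simp: var_def mono_def mons_def)
  ultimately show ?thesis by (simp add: skew_carrier_def)
qed

definition tf :: "nat \<Rightarrow> (((nat \<Rightarrow> nat) \<Rightarrow> 'k) \<Rightarrow> ((nat \<Rightarrow> nat) \<Rightarrow> 'k::field)) \<Rightarrow> nat \<Rightarrow> nat \<Rightarrow> 'k \<Rightarrow> bool" where
  "tf n g s t lam \<longleftrightarrow> g (var s) = smult_el lam (var t) \<and> g (var t) = smult_el (- inverse lam) (var s) \<and>
        (\<forall>i\<in>{1..n}. i \<noteq> s \<and> i \<noteq> t \<longrightarrow> g (var i) = var i)"

lemma tau_in_tf: "tau_in p n G s t lam \<longleftrightarrow>
     s \<in> {1..n} \<and> t \<in> {1..n} \<and> s \<noteq> t \<and> lam \<noteq> 0 \<and> p s t = -1 \<and>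
     (\<forall>j\<in>{1..n}. j \<noteq> s \<and> j \<noteq> t \<longrightarrow> p s j = p t j) \<and> (\<exists>g\<in>G. tf n g s t lam)"
  by (simp add: tau_in_def tf_def)

lemma aut_smult:
  assumes "graded_aut p n g" "i \<in> {1..n}"
  shows "g (smult_el c (var i)) = smult_el c (g (var i))"
proof -
  have "\<forall>c. \<forall>f\<in>skew_carrier n. g (smult_el c f) = smult_el c (g f)"
    using assms(1) unfolding graded_aut_def by blast
  thus ?thesis using var_carrier[OF assms(2)] by blast
qed

lemma inv_tf:
  assumes g: "graded_aut p n g" and h: "graded_aut p n h" and hg: "h \<circ> g = id"
    and t: "tf n g s t lam" and s1: "s \<in> {1..n}" and t1: "t \<in> {1..n}" and l: "lam \<noteq> 0"
  shows "tf n h t s (inverse lam)"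
proof -
  have hv: "h (g x) = x" for x using hg by (metis comp_apply id_apply)
  have "h (smult_el (- inverse lam) (var s)) = var t" using t hv by (metis tf_def)
  hence "smult_el (- inverse lam) (h (var s)) = var t" using aut_smult[OF h s1] by simp
  hence "smult_el (-lam) (smult_el (- inverse lam) (h (var s))) = smult_el (-lam) (var t)" by simp
  hence A: "h (var s) = smult_el (-lam) (var t)" using l by (simp add: smult_smult smult_one)
  have "h (smult_el lam (var t)) = var s" using t hv by (metis tf_def)
  hence "smult_el lam (h (var t)) = var s" using aut_smult[OF h t1] by simp
  hence "smult_el (inverse lam) (smult_el lam (h (var t))) = smult_el (inverse lam) (var s)" by simp
  hence B: "h (var t) = smult_el (inverse lam) (var s)" using l by (simp add: smult_smult smult_one)
  have C: "\<forall>i\<in>{1..n}. i \<noteq> t \<and> i \<noteq> s \<longrightarrow> h (var i) = var i" using t hv by (metis tf_def)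
  show ?thesis using A B C l by (simp add: tf_def)
qed

lemma cube_tf:
  assumes g: "graded_aut p n g" and t: "tf n g s t lam" and s1: "s \<in> {1..n}" and t1: "t \<in> {1..n}"
    and l: "lam \<noteq> 0"
  shows "tf n (g \<circ> g \<circ> g) s t (- lam)"
proof -
  have gs: "g (var s) = smult_el lam (var t)" and gt: "g (var t) = smult_el (- inverse lam) (var s)"
    and gi: "\<forall>i\<in>{1..n}. i \<noteq> s \<and> i \<noteq> t \<longrightarrow> g (var i) = var i" using t by (auto simp: tf_def)
  note sm = aut_smult[OF g]
  have "(g \<circ> g \<circ> g) (var s) = smult_el (- lam) (var t)"
    using l by (simp add: gs gt sm[OF s1] sm[OF t1] smult_smult)
  moreover have "(g \<circ> g \<circ> g) (var t) = smult_el (- inverse (- lam)) (var s)"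
    using l by (simp add: gs gt sm[OF s1] sm[OF t1] smult_smult)
  moreover have "\<forall>i\<in>{1..n}. i \<noteq> s \<and> i \<noteq> t \<longrightarrow> (g \<circ> g \<circ> g) (var i) = var i" using gi by simp
  ultimately show ?thesis by (simp add: tf_def)
qed

lemma conj_tf:
  assumes g: "graded_aut p n g" and h: "graded_aut p n h" and f: "graded_aut p n f"
    and hg: "h \<circ> g = id"
    and tg: "tf n g a b lam" and tf2: "tf n f b c mu"
    and a1: "a \<in> {1..n}" and b1: "b \<in> {1..n}" and c1: "c \<in> {1..n}" and l: "lam \<noteq> 0" and m: "mu \<noteq> 0"
    and ab: "a \<noteq> b" and bc: "b \<noteq> c" and ac: "a \<noteq> c"
  shows "tf n (g \<circ> f \<circ> h) a c (- (lam * mu))"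
proof -
  have th: "tf n h b a (inverse lam)" using inv_tf[OF g h hg tg a1 b1 l] .
  have hb: "h (var b) = smult_el (inverse lam) (var a)" and ha: "h (var a) = smult_el (- lam) (var b)"
    and hi: "\<forall>i\<in>{1..n}. i \<noteq> b \<and> i \<noteq> a \<longrightarrow> h (var i) = var i" using th l by (auto simp: tf_def)
  have ga: "g (var a) = smult_el lam (var b)" and gb: "g (var b) = smult_el (- inverse lam) (var a)"
    and gi: "\<forall>i\<in>{1..n}. i \<noteq> a \<and> i \<noteq> b \<longrightarrow> g (var i) = var i" using tg by (auto simp: tf_def)
  have fb: "f (var b) = smult_el mu (var c)" and fc: "f (var c) = smult_el (- inverse mu) (var b)"
    and fi: "\<forall>i\<in>{1..n}. i \<noteq> b \<and> i \<noteq> c \<longrightarrow> f (var i) = var i" using tf2 by (auto simp: tf_def)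
  have gc: "g (var c) = var c" using gi c1 ac bc by auto
  have hc: "h (var c) = var c" using hi c1 ac bc by auto
  have fa: "f (var a) = var a" using fi a1 ab ac by auto
  note sg = aut_smult[OF g] and sf = aut_smult[OF f]
  have "(g \<circ> f \<circ> h) (var a) = smult_el (- (lam * mu)) (var c)"
    by (simp add: ha sf[OF b1] fb sg[OF c1] gc smult_smult)
  moreover have "(g \<circ> f \<circ> h) (var c) = smult_el (- inverse (- (lam * mu))) (var a)"
    using l m by (simp add: hc fc sg[OF b1] gb smult_smult field_simps)
  moreover have "(g \<circ> f \<circ> h) (var b) = var b"
    using l by (simp add: hb sf[OF a1] fa sg[OF a1] ga smult_smult smult_one)
  moreover have "\<forall>i\<in>{1..n}. i \<noteq> a \<and> i \<noteq> c \<and> i \<noteq> b \<longrightarrow> (g \<circ> f \<circ> h) (var i) = var i"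
    using hi fi gi by simp
  ultimately show ?thesis unfolding tf_def by metis
qed

lemma p_sym:
  fixes a b n :: nat
  assumes p_inv: "\<forall>i\<in>{1..n}. \<forall>j\<in>{1..n}. i > j \<longrightarrow> p i j = inverse (p j i)"
    and a: "a \<in> {1..n}" and b: "b \<in> {1..n}" and ab: "a \<noteq> b" and e: "p a b = (-1::'k::field)"
  shows "p b a = -1"
proof (cases "b > a")
  case True thus ?thesis using p_inv a b e by auto
next
  case False
  hence "a > b" using ab by simp
  hence "p a b = inverse (p b a)" using p_inv a b by auto
  hence "inverse (p b a) = -1" using e by simp
  hence "p b a = inverse (-1)" by (metis inverse_inverse_eq)
  thus ?thesis by simp
qed

lemma tau_rev:
  assumes G: "aut_subgroup p n G" and p_inv: "\<forall>i\<in>{1..n}. \<forall>j\<in>{1..n}. i > j \<longrightarrow> p i j = inverse (p j i)"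
    and t: "tau_in p n G a b lam"
  shows "tau_in p n G b a (inverse lam)"
proof -
  from t obtain g where gG: "g \<in> G" and tg: "tf n g a b lam" and a: "a \<in> {1..n}" and b: "b \<in> {1..n}"
    and ab: "a \<noteq> b" and l: "lam \<noteq> 0" and e: "p a b = -1"
    and pj: "\<forall>j\<in>{1..n}. j \<noteq> a \<and> j \<noteq> b \<longrightarrow> p a j = p b j"
    unfolding tau_in_tf by blast
  from G gG obtain h where hG: "h \<in> G" and hg: "h \<circ> g = id" unfolding aut_subgroup_def by blast
  have ga: "graded_aut p n g" "graded_aut p n h" using G gG hG unfolding aut_subgroup_def by auto
  have "tf n h b a (inverse lam)" using inv_tf[OF ga hg tg a b l] .
  moreover have "p b a = -1" using p_sym[OF p_inv a b ab e] .
  ultimately show ?thesis unfolding tau_in_tf using hG a b ab l pj by auto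
qed

lemma tau_neg:
  assumes G: "aut_subgroup p n G" and t: "tau_in p n G a b lam"
  shows "tau_in p n G a b (- lam)"
proof -
  from t obtain g where gG: "g \<in> G" and tg: "tf n g a b lam" and a: "a \<in> {1..n}" and b: "b \<in> {1..n}"
    and l: "lam \<noteq> 0"
    unfolding tau_in_tf by blast
  have ga: "graded_aut p n g" using G gG unfolding aut_subgroup_def by auto
  have "g \<circ> g \<circ> g \<in> G" using G gG unfolding aut_subgroup_def by blast
  thus ?thesis using cube_tf[OF ga tg a b l] t l unfolding tau_in_tf by auto
qed

lemma tau_comp:
  assumes G: "aut_subgroup p n G" and p_inv: "\<forall>i\<in>{1..n}. \<forall>j\<in>{1..n}. i > j \<longrightarrow> p i j = inverse (p j i)"
    and t1: "tau_in p n G a b lam" and t2: "tau_in p n G b c mu" and ac: "a \<noteq> c"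
  shows "tau_in p n G a c (lam * mu)"
proof -
  from t1 obtain g where gG: "g \<in> G" and tg: "tf n g a b lam" and a: "a \<in> {1..n}" and b: "b \<in> {1..n}"
    and ab: "a \<noteq> b" and l: "lam \<noteq> 0" and e: "p a b = -1"
    and pj: "\<forall>j\<in>{1..n}. j \<noteq> a \<and> j \<noteq> b \<longrightarrow> p a j = p b j"
    unfolding tau_in_tf by blast
  from t2 obtain f where fG: "f \<in> G" and tf2: "tf n f b c mu" and c: "c \<in> {1..n}"
    and bc: "b \<noteq> c" and m: "mu \<noteq> 0" and e2: "p b c = -1"
    and pj2: "\<forall>j\<in>{1..n}. j \<noteq> b \<and> j \<noteq> c \<longrightarrow> p b j = p c j"
    unfolding tau_in_tf by blast
  from G gG obtain h where hG: "h \<in> G" and hg: "h \<circ> g = id" unfolding aut_subgroup_def by blast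
  have ga: "graded_aut p n g" "graded_aut p n h" "graded_aut p n f"
    using G gG hG fG unfolding aut_subgroup_def by auto
  have T: "tf n (g \<circ> f \<circ> h) a c (- (lam * mu))"
    using conj_tf[OF ga(1) ga(2) ga(3) hg tg tf2 a b c l m ab bc ac] .
  have "g \<circ> f \<circ> h \<in> G" using G gG fG hG unfolding aut_subgroup_def by blast
  moreover have "p a c = -1" using pj c ac bc e2 by auto
  moreover have "\<forall>j\<in>{1..n}. j \<noteq> a \<and> j \<noteq> c \<longrightarrow> p a j = p c j"
  proof (intro ballI impI)
    fix j assume j: "j \<in> {1..n}" "j \<noteq> a \<and> j \<noteq> c"
    show "p a j = p c j"
    proof (cases "j = b")
      case True thus ?thesis using e p_sym[OF p_inv b c bc e2] by simp
    next
      case False thus ?thesis using pj pj2 j by auto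
    qed
  qed
  ultimately have "tau_in p n G a c (- (lam * mu))"
    unfolding tau_in_tf using T a c ac l m by auto
  from tau_neg[OF G this] show ?thesis by simp
qed

lemma tau_chain:
  assumes G: "aut_subgroup p n G" and p_inv: "\<forall>i\<in>{1..n}. \<forall>j\<in>{1..n}. i > j \<longrightarrow> p i j = inverse (p j i)"
    and r: "(i, j) \<in> {(s, t). \<exists>lam. tau_in p n G s t lam}\<^sup>+"
  shows "i \<noteq> j \<longrightarrow> (\<exists>lam. tau_in p n G i j lam)"
  using r
proof (induction rule: trancl_induct)
  case (base y) thus ?case by auto
next
  case (step y z)
  show ?case
  proof
    assume iz: "i \<noteq> z"
    from step.hyps(2) obtain mu where t2: "tau_in p n G y z mu" by auto
    show "\<exists>lam. tau_in p n G i z lam"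
    proof (cases "i = y")
      case True thus ?thesis using t2 by auto
    next
      case False
      then obtain lam where "tau_in p n G i y lam" using step.IH by auto
      thus ?thesis using tau_comp[OF G p_inv _ t2 iz] by blast
    qed
  qed
qed

theorem lemma4p1:
  fixes p :: "nat \<Rightarrow> nat \<Rightarrow> 'k::field_char_0"
    and n :: nat
    and G :: "(((nat \<Rightarrow> nat) \<Rightarrow> 'k) \<Rightarrow> ((nat \<Rightarrow> nat) \<Rightarrow> 'k)) set"
  assumes alg_closed: "\<forall>q :: 'k poly. degree q \<noteq> 0 \<longrightarrow> (\<exists>x. poly q x = 0)"
    and n2: "n \<ge> 2"
    and p_nz: "\<forall>i\<in>{1..n}. \<forall>j\<in>{1..n}. p i j \<noteq> 0"
    and p_diag: "\<forall>i\<in>{1..n}. p i i = 1"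
    and p_inv: "\<forall>i\<in>{1..n}. \<forall>j\<in>{1..n}. i > j \<longrightarrow> p i j = inverse (p j i)"
    and G_sub: "aut_subgroup p n G"
    and G_fin: "finite G"
    and G_gen: "generated_by_qr p n G"
    and circle: "is_circle p n G"
  shows "(\<exists>c :: nat \<Rightarrow> 'k. (\<forall>i\<in>{1..n}. c i \<noteq> 0) \<and>
            (\<forall>i\<in>{1..n}. \<forall>j\<in>{1..n}. i \<noteq> j \<longrightarrow> tau_in p n G i j (c j / c i)))
         \<and> (\<forall>i\<in>{1..n}. \<forall>j\<in>{1..n}. i < j \<longrightarrow> p i j = -1)"
proof -
  have ex: "\<exists>lam. tau_in p n G i j lam" if "i \<in> {1..n}" "j \<in> {1..n}" "i \<noteq> j" for i j
    using tau_chain[OF G_sub p_inv] circle that unfolding is_circle_def by blast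
  define c :: "nat \<Rightarrow> 'k" where "c j = (if j = 1 then 1 else SOME lam. tau_in p n G 1 j lam)" for j
  have one: "1 \<in> {1..n}" using n2 by auto
  have c1: "tau_in p n G 1 j (c j)" if "j \<in> {1..n}" "j \<noteq> 1" for j
    using someI_ex[OF ex[OF one that(1) that(2)[symmetric]]] that by (simp add: c_def)
  have cnz: "c j \<noteq> 0" if "j \<in> {1..n}" for j
    using c1[OF that] by (cases "j = 1") (auto simp: c_def tau_in_def)
  have main: "tau_in p n G i j (c j / c i)" if ij: "i \<in> {1..n}" "j \<in> {1..n}" "i \<noteq> j" for i j
  proof (cases "i = 1")
    case True thus ?thesis using c1[OF ij(2)] ij by (simp add: c_def)
  next
    case False
    have r: "tau_in p n G i 1 (inverse (c i))" using tau_rev[OF G_sub p_inv c1[OF ij(1) False]] .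
    show ?thesis
    proof (cases "j = 1")
      case True thus ?thesis using r by (simp add: c_def divide_inverse)
    next
      case False
      have "tau_in p n G i j (inverse (c i) * c j)" using tau_comp[OF G_sub p_inv r c1[OF ij(2) False] ij(3)] .
      thus ?thesis by (simp add: divide_inverse mult.commute)
    qed
  qed
  have "\<forall>i\<in>{1..n}. \<forall>j\<in>{1..n}. i < j \<longrightarrow> p i j = -1"
    using ex unfolding tau_in_def by fastforce
  thus ?thesis using main cnz by blast
qed

end
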